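(* Let $a\in\mathbb{R}$, $q,r>0$ and let $\kappa\ge1$ be an integer. For $k_1\in\mathbb{R}^{\kappa\times 1}$ and $k_2\in\mathbb{R}^{1\times\kappa}$ write $\mathbf{k}:=k_2k_1\in\mathbb{R}$, let $\mathcal{K}:=\{(k_1,k_2): a-\mathbf{k}<0\}$, define $\mathcal{L}(k_1,k_2):=-\frac{q+r\mathbf{k}^2}{2(a-\mathbf{k})}$ on $\mathcal{K}$, and $\underline{\mathcal{L}}:=\inf_{\mathcal{K}}\mathcal{L}$. For $\gamma>0$ let $\mathcal{K}_\gamma:=\{(k_1,k_2)\in\mathcal{K}: \|k_1+k_2^\top\|^2\ge\gamma\}$. Then for every $\gamma>\max(0,4a)$ the constant $$\underline{\mu}:=\frac{r}{4}\min\left\{1,\sqrt{\frac{\gamma^2}{(\gamma-4a)^2}}\right\}$$ is positive and $$\|\nabla\mathcal{L}(k_1,k_2)\|\ \ge\ \sqrt{\underline{\mu}\,(\mathcal{L}(k_1,k_2)-\underline{\mathcal{L}})}\qquad\text{for all }(k_1,k_2)\in\mathcal{K}_\gamma.$$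
   Context: $\mathcal{L}$ is the LQR cost $\mathbb{E}_{x_0\sim\mathcal{N}(0,1)}\int_0^\infty(qx^2+ru^2)dt$ of $\dot x=ax+u$, $u=-k_2k_1x$, overparameterized through the factorization $\mathbf{k}=k_2k_1$. The gradient $\nabla\mathcal{L}$ is with respect to all entries of $(k_1,k_2)$. *)

theory Defs
  imports "HOL-Analysis.Analysis"
begin

text \<open>A column vector k1 and a row vector k2 in
  R^kappa are both represented as elements of real^'n (the transpose of k2 has the
  same coordinates); the product k2 k1 is the inner product.\<close>

definition lqr_cost :: "real \<Rightarrow> real \<Rightarrow> real \<Rightarrow> ((real^'n) \<times> (real^'n)) \<Rightarrow> real" where
  "lqr_cost a q r = (\<lambda>(k1, k2). - (q + r * (k2 \<bullet> k1)\<^sup>2) / (2 * (a - k2 \<bullet> k1)))"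

definition stab_set :: "real \<Rightarrow> ((real^'n) \<times> (real^'n)) set" where
  "stab_set a = {(k1, k2). a - k2 \<bullet> k1 < 0}"

text \<open>Gradient w.r.t. all entries of (k1,k2): the Riesz representative of the
  Frechet derivative on the Euclidean product space.\<close>

definition grad :: "('a::real_inner \<Rightarrow> real) \<Rightarrow> 'a \<Rightarrow> 'a" where
  "grad f x = (THE g. (f has_derivative (\<lambda>h. g \<bullet> h)) (at x))"

end

theory Submission imports Defs begin

lemma hA: fixes r m P s :: real assumes "s > 0"
  shows "r / 4 * m * (r * P / (2 * s)) = (r\<^sup>2 * P / (8 * s^4)) * (m * s^3)"
  using assms by (simp add: field_simps power2_eq_square power3_eq_cube power4_eq_xxxx)

lemma hB: fixes r u v N s :: real assumes "s > 0"
  shows "(r\<^sup>2 * u\<^sup>2 / (8 * s^4)) * (2 * v\<^sup>2 * N) = (r * u * v / (2 * s\<^sup>2))\<^sup>2 * N"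
  using assms by (simp add: field_simps power2_eq_square power4_eq_xxxx)


lemma core:
  fixes a s d N g m :: real
  assumes s: "s > 0" and d: "d > \<bar>a\<bar>" and N1: "N \<ge> 2 * (s + a)" and N1': "N \<ge> - 2 * (s + a)"
    and N2: "N + 2 * (s + a) \<ge> g"
    and g: "g > 0" "g > 4 * a" and m: "m \<le> 1" "m * (g - 4 * a) \<le> g" "m > 0"
  shows "m * s^3 \<le> 2 * (s + d)^2 * N"
proof -
  have d0: "d > 0" "d > a" "d > - a" using d by auto
  have sd: "s^2 \<le> (s + d)^2" using s d0 by (intro power_mono) auto
  have N0: "N \<ge> 0" using N1 N1' by linarith
  have key: "m * s^3 \<le> 2 * s^2 * N" if "N \<ge> s"
  proof -
    have "m * s^3 \<le> 1 * s^3" using m s by (intro mult_right_mono) auto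
    also have "\<dots> = s^2 * s" by (simp add: power3_eq_cube power2_eq_square)
    also have "\<dots> \<le> s^2 * N" using that by (intro mult_left_mono) auto
    also have "\<dots> \<le> 2 * s^2 * N" using N0 by simp
    finally show ?thesis .
  qed
  have fin: "2 * s^2 * N \<le> 2 * (s + d)^2 * N" using sd N0 by (intro mult_right_mono) auto
  show ?thesis
  proof (cases "a \<ge> 0 \<or> s \<ge> - 2 * a")
    case True
    then have "N \<ge> s" using N1 s by (elim disjE) (simp_all add: algebra_simps)
    then show ?thesis using key fin by linarith
  next
    case False
    define b where "b = -a"
    have b: "b > 0" "s < 2 * b" using False b_def by auto
    have gN: "g \<le> 2 * N" using N1 N2 by linarith
    have m4: "m * (4 * b) \<le> g"
    proof -
      have "m * (4 * b) \<le> m * (g - 4 * a)" using m g b_def by (intro mult_left_mono) auto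
      then show ?thesis using m by linarith
    qed
    have "m * s^3 * (4 * b) = (m * (4 * b)) * s^3" by simp
    also have "\<dots> \<le> g * s^3" using m4 s by (intro mult_right_mono) auto
    also have "\<dots> = g * (s * s^2)" by (simp add: power3_eq_cube power2_eq_square)
    also have "\<dots> \<le> g * (2 * b * s^2)" using b s g
      by (intro mult_left_mono) auto
    also have "\<dots> \<le> (2 * N) * (2 * b * s^2)" using gN b by (intro mult_right_mono) auto
    also have "\<dots> = (2 * s^2 * N) * (2 * b)" by simp
    also have "\<dots> \<le> (2 * (s + d)^2 * N) * (2 * b)" using fin b by (intro mult_right_mono) (simp_all add: sd N0)
    also have "\<dots> \<le> (2 * (s + d)^2 * N) * (4 * b)" using b N0 by (intro mult_left_mono) auto
    finally show ?thesis using b by (simp add: mult_ac)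
  qed
qed

lemma main_point:
  fixes a q r \<gamma> :: real and k1 k2 :: "real^'n"
  assumes "q > 0" and "r > 0" and "\<gamma> > max 0 (4 * a)"
    and H: "(k1, k2) \<in> stab_set a \<and> \<gamma> \<le> (norm (k1 + k2))\<^sup>2"
  shows "lqr_cost a q r differentiable (at (k1, k2)) \<and>
       norm (grad (lqr_cost a q r) (k1, k2)) \<ge>
         sqrt (r / 4 * min 1 (sqrt (\<gamma>\<^sup>2 / (\<gamma> - 4 * a)\<^sup>2)) *
               (lqr_cost a q r (k1, k2) - Inf (lqr_cost a q r ` (stab_set a :: ((real^'m) \<times> (real^'m)) set))))"
proof -
  define m where "m = min 1 (sqrt (\<gamma>\<^sup>2 / (\<gamma> - 4 * a)\<^sup>2))"
  have g0: "\<gamma> > 0" "\<gamma> > 4 * a" using assms(3) by auto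
  have sq: "sqrt (\<gamma>\<^sup>2 / (\<gamma> - 4 * a)\<^sup>2) = \<gamma> / (\<gamma> - 4 * a)"
    using g0 by (simp add: real_sqrt_divide)
  have m1: "m \<le> 1" "m > 0" using g0 by (auto simp: m_def sq)
  have m2: "m * (\<gamma> - 4 * a) \<le> \<gamma>"
  proof -
    have "m \<le> \<gamma> / (\<gamma> - 4 * a)" by (simp add: m_def sq)
    then show ?thesis using g0 by (simp add: field_simps)
  qed
  define d where "d = sqrt (a\<^sup>2 + q / r)"
  have dpos: "d > \<bar>a\<bar>"
  proof -
    have "sqrt (a\<^sup>2) < d" unfolding d_def using assms by (intro real_sqrt_less_mono) auto
    then show ?thesis by simp
  qed
  have dsq: "d\<^sup>2 = a\<^sup>2 + q / r" unfolding d_def using assms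
    by (simp add: add_nonneg_nonneg)
  have qd: "q = r * (d\<^sup>2 - a\<^sup>2)" using dsq assms by (simp add: field_simps)
  define g where "g k = - (q + r * k\<^sup>2) / (2 * (a - k))" for k :: real
  have lqr: "lqr_cost a q r = (\<lambda>x. g (snd x \<bullet> fst x))"
    by (auto simp: lqr_cost_def g_def fun_eq_iff case_prod_beta)
  have gform: "g k = r * (a + d) + r * (k - a - d)\<^sup>2 / (2 * (k - a))" if "k > a" for k
    using that unfolding g_def qd by (simp add: field_simps power2_eq_square)
  have glow: "g k \<ge> r * (a + d)" if "k > a" for k
    using gform[OF that] that assms by auto
  show ?thesis
  proof (intro conjI)
    define k where "k = k2 \<bullet> k1"
    define s where "s = k - a"
    have s0: "s > 0" using H by (simp add: stab_set_def k_def s_def)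
    define D where "D = r * (s - d) * (s + d) / (2 * s\<^sup>2)"
    have gd0: "(g has_real_derivative (- (2 * r * k * (2 * (a - k)) + (q + r * k\<^sup>2) * 2) / (2 * (a - k))\<^sup>2)) (at k)"
      unfolding g_def using s0 s_def
      by (auto intro!: derivative_eq_intros simp: power2_eq_square field_simps)
    have "- (2 * r * k * (2 * (a - k)) + (q + r * k\<^sup>2) * 2) / (2 * (a - k))\<^sup>2 = D"
    proof -
      have ke: "k = s + a" using s_def by simp
      have am: "a - (s + a) = - s" by simp
      show ?thesis unfolding D_def qd ke am using s0 by (simp add: field_simps power2_eq_square)
    qed
    with gd0 have gd: "(g has_real_derivative D) (at k)" by simp
    have ider: "((\<lambda>x. snd x \<bullet> fst x) has_derivative (\<lambda>h. snd h \<bullet> k1 + k2 \<bullet> fst h)) (at (k1, k2))"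
      by (auto intro!: derivative_eq_intros)
    have hd0: "((\<lambda>x. g (snd x \<bullet> fst x)) has_derivative (\<lambda>h. D * (snd h \<bullet> k1 + k2 \<bullet> fst h))) (at (k1, k2))"
    proof -
      have gd': "(g has_derivative (*) D) (at ((\<lambda>x. snd x \<bullet> fst x) (k1, k2)))"
        using gd unfolding has_field_derivative_def k_def by simp
      show ?thesis using has_derivative_compose[OF ider gd'] by (simp add: mult.commute)
    qed
    have feq: "(\<lambda>h. D * (snd h \<bullet> k1 + k2 \<bullet> fst h)) = (\<lambda>h. (D *\<^sub>R (k2, k1)) \<bullet> h)"
      by (auto simp: fun_eq_iff algebra_simps inner_commute)
    have hd: "(lqr_cost a q r has_derivative (\<lambda>h. (D *\<^sub>R (k2, k1)) \<bullet> h)) (at (k1, k2))"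
      using hd0 unfolding lqr feq .
    show "lqr_cost a q r differentiable (at (k1, k2))"
      using hd unfolding differentiable_def by blast
    have gr: "grad (lqr_cost a q r) (k1, k2) = D *\<^sub>R (k2, k1)"
      unfolding grad_def
    proof (rule the_equality)
      show "(lqr_cost a q r has_derivative (\<lambda>h. (D *\<^sub>R (k2, k1)) \<bullet> h)) (at (k1, k2))" by (rule hd)
    next
      fix G assume "(lqr_cost a q r has_derivative (\<lambda>h. G \<bullet> h)) (at (k1, k2))"
      from has_derivative_unique[OF this hd]
      have "G \<bullet> (G - D *\<^sub>R (k2, k1)) = (D *\<^sub>R (k2, k1)) \<bullet> (G - D *\<^sub>R (k2, k1))"
        by metis
      then have "(G - D *\<^sub>R (k2, k1)) \<bullet> (G - D *\<^sub>R (k2, k1)) = 0"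
        by (simp add: inner_diff_left)
      then show "G = D *\<^sub>R (k2, k1)" by simp
    qed
    show "norm (grad (lqr_cost a q r) (k1, k2)) \<ge>
         sqrt (r / 4 * min 1 (sqrt (\<gamma>\<^sup>2 / (\<gamma> - 4 * a)\<^sup>2)) *
               (lqr_cost a q r (k1, k2) - Inf (lqr_cost a q r ` (stab_set a :: ((real^'m) \<times> (real^'m)) set))))"
    proof -
      define N where "N = (norm k1)\<^sup>2 + (norm k2)\<^sup>2"
      have cs: "\<bar>k\<bar> \<le> norm k1 * norm k2"
        unfolding k_def using Cauchy_Schwarz_ineq2[of k2 k1] by (simp add: mult.commute)
      have "0 \<le> (norm k1 - norm k2)\<^sup>2" by simp
      then have "2 * (norm k1 * norm k2) \<le> N" unfolding N_def by (simp add: power2_eq_square algebra_simps)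
      then have N1: "N \<ge> 2 * (s + a)" and N1': "N \<ge> - 2 * (s + a)" using cs s_def by auto
      have "(norm (k1 + k2))\<^sup>2 = N + 2 * k"
        unfolding N_def k_def by (simp add: power2_norm_eq_inner inner_add_left inner_add_right inner_commute)
      then have N2: "N + 2 * (s + a) \<ge> \<gamma>" using H s_def by simp
      have cr: "m * s^3 \<le> 2 * (s + d)^2 * N"
        by (rule core[OF s0 dpos N1 N1' N2 g0 m1(1) m2 m1(2)])
      have N0: "N \<ge> 0" unfolding N_def by simp
      define e :: "real^'m" where "e = axis undefined 1"
      have ee: "e \<bullet> e = 1" unfolding e_def by (simp add: inner_axis_axis)
      have "((\<bar>a\<bar> + 1) *\<^sub>R e, e) \<in> (stab_set a :: ((real^'m) \<times> (real^'m)) set)"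
        unfolding stab_set_def using ee by simp
      then have ne: "lqr_cost a q r ` (stab_set a :: ((real^'m) \<times> (real^'m)) set) \<noteq> {}" by blast
      have lb: "r * (a + d) \<le> Inf (lqr_cost a q r ` (stab_set a :: ((real^'m) \<times> (real^'m)) set))"
      proof (rule cInf_greatest[OF ne])
        fix y assume "y \<in> lqr_cost a q r ` (stab_set a :: ((real^'m) \<times> (real^'m)) set)"
        then obtain x :: "(real^'m) \<times> (real^'m)" where "x \<in> stab_set a" "y = lqr_cost a q r x" by blast
        then show "r * (a + d) \<le> y" unfolding lqr using glow[of "snd x \<bullet> fst x"]
          by (auto simp: stab_set_def case_prod_beta)
      qed
      have Lk: "lqr_cost a q r (k1, k2) = r * (a + d) + r * (s - d)\<^sup>2 / (2 * s)"
        unfolding lqr using gform[of k] s0 s_def by (simp add: k_def)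
      define C where "C = r\<^sup>2 * (s - d)\<^sup>2 / (8 * s^4)"
      have C0: "C \<ge> 0" unfolding C_def using s0 by simp
      have "r / 4 * m * (lqr_cost a q r (k1, k2) - Inf (lqr_cost a q r ` (stab_set a :: ((real^'m) \<times> (real^'m)) set)))
          \<le> r / 4 * m * (r * (s - d)\<^sup>2 / (2 * s))"
        using lb m1 assms Lk by (intro mult_left_mono) auto
      also have "\<dots> = C * (m * s^3)" unfolding C_def by (rule hA[OF s0])
      also have "\<dots> \<le> C * (2 * (s + d)^2 * N)" using cr C0 by (rule mult_left_mono)
      also have "\<dots> = D\<^sup>2 * N" unfolding C_def D_def by (rule hB[OF s0])
      finally have ineq: "r / 4 * m * (lqr_cost a q r (k1, k2) - Inf (lqr_cost a q r ` (stab_set a :: ((real^'m) \<times> (real^'m)) set))) \<le> D\<^sup>2 * N" .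
      have "norm (grad (lqr_cost a q r) (k1, k2)) = \<bar>D\<bar> * sqrt N"
        unfolding gr norm_scaleR norm_Pair N_def by (simp add: add.commute)
      also have "\<dots> = sqrt (D\<^sup>2 * N)" by (simp add: real_sqrt_mult)
      finally show ?thesis using ineq real_sqrt_le_mono by (simp add: m_def)
    qed
  qed
qed

theorem corollary1:
  fixes a q r \<gamma> :: real
  assumes "q > 0" and "r > 0" and "\<gamma> > max 0 (4 * a)"
  shows "r / 4 * min 1 (sqrt (\<gamma>\<^sup>2 / (\<gamma> - 4 * a)\<^sup>2)) > 0 \<and>
    (\<forall>(k1::real^'n) k2. (k1, k2) \<in> stab_set a \<and> (norm (k1 + k2))\<^sup>2 \<ge> \<gamma> \<longrightarrow>
       lqr_cost a q r differentiable (at (k1, k2)) \<and>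
       norm (grad (lqr_cost a q r) (k1, k2)) \<ge>
         sqrt (r / 4 * min 1 (sqrt (\<gamma>\<^sup>2 / (\<gamma> - 4 * a)\<^sup>2)) *
               (lqr_cost a q r (k1, k2) - Inf (lqr_cost a q r ` stab_set a))))"
proof (intro conjI allI impI)
  have g0: "\<gamma> > 0" "\<gamma> > 4 * a" using assms(3) by auto
  have sq: "sqrt (\<gamma>\<^sup>2 / (\<gamma> - 4 * a)\<^sup>2) = \<gamma> / (\<gamma> - 4 * a)"
    using g0 by (simp add: real_sqrt_divide)
  show "r / 4 * min 1 (sqrt (\<gamma>\<^sup>2 / (\<gamma> - 4 * a)\<^sup>2)) > 0"
    using g0 assms(2) by (simp add: sq)
next
  fix k1 k2 :: "real^'n"
  assume "(k1, k2) \<in> stab_set a \<and> (norm (k1 + k2))\<^sup>2 \<ge> \<gamma>"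
  from main_point[OF assms this] show "lqr_cost a q r differentiable (at (k1, k2))" by blast
next
  fix k1 k2 :: "real^'n"
  assume "(k1, k2) \<in> stab_set a \<and> (norm (k1 + k2))\<^sup>2 \<ge> \<gamma>"
  from main_point[OF assms this] show "norm (grad (lqr_cost a q r) (k1, k2)) \<ge>
         sqrt (r / 4 * min 1 (sqrt (\<gamma>\<^sup>2 / (\<gamma> - 4 * a)\<^sup>2)) *
               (lqr_cost a q r (k1, k2) - Inf (lqr_cost a q r ` stab_set a)))" by blast
qed

end
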